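(* Let $\phi>1$ be an integer. For arbitrarily large integers $n$ there exist (families of) feasible $n$-node graphs with election index $\phi$ such that leader election in time $\phi$ in these graphs requires advice of size $\Omega\!\left(n(\log\log n)^2/\log n\right)$. Precisely: there is a constant $c>0$ such that for infinitely many integers $n$ there is a finite family $\mathcal{F}_n$ of feasible $n$-node graphs, each with election index $\phi$, such that for every deterministic leader election algorithm with advice that performs leader election in time $\phi$ in every graph of $\mathcal{F}_n$, some graph of $\mathcal{F}_n$ receives advice of length at least $c\, n(\log\log n)^2/\log n$.
   Context: A graph is a simple undirected connected finite graph whose nodes have no identifiers; at each node $v$ of degree $d$ the incident edges carry distinct port numbers $0,\dots,d-1$ (local to each node). The truncated view $\mathcal{V}^0(v)$ is a single node; $\mathcal{V}^{l+1}(v)$ is the port-labelled rooted tree whose root has, for every neighbour $v_i$ of $v$, a child $x_i$ joined by an edge carrying the same two port numbers as $\{v,v_i\}$ (the one at $v$ at the root side), and $x_i$ is the root of a copy of $\mathcal{V}^l(v_i)$. The augmented truncated view $\mathcal{B}^l(v)$ is $\mathcal{V}^l(v)$ with each leaf labelled by the degree in $G$ of the node it represents. A graph is feasible if for some $l$ the views $\mathcal{B}^l(v)$ of all nodes are pairwise distinct; its election index is the smallest such $l$. Model (LOCAL): synchronous rounds, all nodes start simultaneously, in each round every node exchanges arbitrary messages with all neighbours and computes arbitrarily. Leader election: every node $v$ outputs a sequence $(p_1,q_1,\dots,p_k,q_k)$ of nonnegative integers describing a simple path starting at $v$ whose $i$-th edge has port $p_i$ at its endpoint closer to $v$ and $q_i$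 at the other endpoint; all these paths must end at a common node. Time is the number of rounds until all nodes output. Advice: an oracle knowing the entire port-labelled graph gives the same binary string to all nodes before the start; its length is the size of advice. In a deterministic algorithm with advice, the actions/output of node $v$ in round $r$ are a function of the advice and of $\mathcal{B}^r(v)$. Logarithms are base 2. *)

theory Defs
  imports Complex_Main
begin

text \<open>Nodes are represented as 0..<gsize G; these numbers are
  never visible to the algorithm, which only sees augmented truncated views.
  port G v w is the port number at v of the edge {v,w}.\<close>

record pgraph =
  gsize :: nat
  adj :: "nat \<Rightarrow> nat \<Rightarrow> bool"
  port :: "nat \<Rightarrow> nat \<Rightarrow> nat"

definition deg :: "pgraph \<Rightarrow> nat \<Rightarrow> nat" where
  "deg G v = card {w. adj G v w}"

definition wf_pgraph :: "pgraph \<Rightarrow> bool" where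
  "wf_pgraph G \<longleftrightarrow>
     gsize G \<ge> 1 \<and>
     (\<forall>u w. adj G u w \<longrightarrow> u < gsize G \<and> w < gsize G) \<and>
     (\<forall>u w. adj G u w \<longrightarrow> adj G w u) \<and>
     (\<forall>u. \<not> adj G u u) \<and>
     (\<forall>u<gsize G. \<forall>w<gsize G. (adj G)\<^sup>*\<^sup>* u w) \<and>
     (\<forall>v<gsize G. bij_betw (port G v) {w. adj G v w} {0..<deg G v})"

definition nbr :: "pgraph \<Rightarrow> nat \<Rightarrow> nat \<Rightarrow> nat" where
  "nbr G v p = (THE w. adj G v w \<and> port G v w = p)"

text \<open>Port-labelled rooted trees: a leaf carries a degree label; an inner node carries the
  list of its children ordered by the port at the root, each child given together with the
  two port numbers of the connecting edge (port at the parent side, port at the child side).\<close>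
datatype view = VLeaf nat | VNode "(nat \<times> nat \<times> view) list"

fun bview :: "pgraph \<Rightarrow> nat \<Rightarrow> nat \<Rightarrow> view" where
  "bview G 0 v = VLeaf (deg G v)"
| "bview G (Suc l) v =
     VNode (map (\<lambda>p. (p, port G (nbr G v p) v, bview G l (nbr G v p))) [0..<deg G v])"

definition feasible :: "pgraph \<Rightarrow> bool" where
  "feasible G \<longleftrightarrow> (\<exists>l. inj_on (bview G l) {0..<gsize G})"

definition election_index :: "pgraph \<Rightarrow> nat" where
  "election_index G = (LEAST l. inj_on (bview G l) {0..<gsize G})"

fun follow :: "pgraph \<Rightarrow> nat \<Rightarrow> (nat \<times> nat) list \<Rightarrow> nat list option" where
  "follow G v [] = Some [v]"
| "follow G v ((p, q) # rest) =
     (if p < deg G v \<and> port G (nbr G v p) v = q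
      then map_option (Cons v) (follow G (nbr G v p) rest) else None)"

definition simple_path_to :: "pgraph \<Rightarrow> nat \<Rightarrow> (nat \<times> nat) list \<Rightarrow> nat \<Rightarrow> bool" where
  "simple_path_to G v out l \<longleftrightarrow>
     (\<exists>vs. follow G v out = Some vs \<and> distinct vs \<and> last vs = l)"

text \<open>A deterministic algorithm with advice: A adv r B is the output (if any) produced in
  round r by a node whose augmented truncated view of depth r is B, given advice adv.\<close>
type_synonym algorithm = "bool list \<Rightarrow> nat \<Rightarrow> view \<Rightarrow> (nat \<times> nat) list option"

definition output_round :: "algorithm \<Rightarrow> bool list \<Rightarrow> pgraph \<Rightarrow> nat \<Rightarrow> nat" where
  "output_round A adv G v = (LEAST r. A adv r (bview G r v) \<noteq> None)"

definition node_output :: "algorithm \<Rightarrow> bool list \<Rightarrow> pgraph \<Rightarrow> nat \<Rightarrow> (nat \<times> nat) list" where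
  "node_output A adv G v = the (A adv (output_round A adv G v) (bview G (output_round A adv G v) v))"

definition elects_in_time :: "algorithm \<Rightarrow> pgraph \<Rightarrow> nat \<Rightarrow> bool list \<Rightarrow> bool" where
  "elects_in_time A G t adv \<longleftrightarrow>
     (\<forall>v<gsize G. \<exists>r\<le>t. A adv r (bview G r v) \<noteq> None) \<and>
     (\<exists>l<gsize G. \<forall>v<gsize G. simple_path_to G v (node_output A adv G v) l)"

end

theory Submission
  imports Defs "HOL-Combinatorics.Permutations"
begin


lemma wfD:
  assumes "wf_pgraph G"
  shows "gsize G \<ge> 1" "\<And>u w. adj G u w \<Longrightarrow> u < gsize G \<and> w < gsize G"
    "\<And>u w. adj G u w \<Longrightarrow> adj G w u" "\<And>u. \<not> adj G u u"
    "\<And>v. v < gsize G \<Longrightarrow> bij_betw (port G v) {w. adj G v w} {0..<deg G v}"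
  using assms unfolding wf_pgraph_def by auto

lemma W1:
  assumes "wf_pgraph G" "adj G v w"
  shows "nbr G v (port G v w) = w" "port G v w < deg G v"
proof -
  have v: "v < gsize G" using wfD(2)[OF assms(1) assms(2)] by simp
  have b: "bij_betw (port G v) {w. adj G v w} {0..<deg G v}" using wfD(5)[OF assms(1) v] .
  show "port G v w < deg G v" using b assms(2) unfolding bij_betw_def by auto
  show "nbr G v (port G v w) = w" unfolding nbr_def
  proof (rule the_equality)
    show "adj G v w \<and> port G v w = port G v w" using assms(2) by simp
    fix w' assume "adj G v w' \<and> port G v w' = port G v w"
    then show "w' = w" using b assms(2) unfolding bij_betw_def inj_on_def by auto
  qed
qed

lemma W2:
  assumes "wf_pgraph G" "v < gsize G" "p < deg G v"
  shows "adj G v (nbr G v p)" "port G v (nbr G v p) = p"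
proof -
  have b: "bij_betw (port G v) {w. adj G v w} {0..<deg G v}" using wfD(5)[OF assms(1,2)] .
  have "p \<in> port G v ` {w. adj G v w}" using b assms(3) unfolding bij_betw_def by auto
  then obtain w where w: "adj G v w" "port G v w = p" by auto
  then have "nbr G v p = w" using W1[OF assms(1) w(1)] by simp
  then show "adj G v (nbr G v p)" "port G v (nbr G v p) = p" using w by auto
qed

lemma bview_Suc_eq:
  assumes "bview G (Suc m) u = bview G (Suc m) v"
  shows "deg G u = deg G v"
    "\<And>p. p < deg G u \<Longrightarrow> port G (nbr G u p) u = port G (nbr G v p) v
        \<and> bview G m (nbr G u p) = bview G m (nbr G v p)"
proof -
  let ?f = "\<lambda>u p. (p, port G (nbr G u p) u, bview G m (nbr G u p))"
  have e: "map (?f u) [0..<deg G u] = map (?f v) [0..<deg G v]" using assms by simp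
  then show d: "deg G u = deg G v" using map_eq_imp_length_eq by fastforce
  fix p assume "p < deg G u"
  then have "map (?f u) [0..<deg G u] ! p = map (?f v) [0..<deg G v] ! p" using e by simp
  then show "port G (nbr G u p) u = port G (nbr G v p) v
        \<and> bview G m (nbr G u p) = bview G m (nbr G v p)" using \<open>p < deg G u\<close> d by simp
qed

fun vdeg :: "view \<Rightarrow> nat" where
  "vdeg (VLeaf d) = d" | "vdeg (VNode xs) = length xs"

lemma vdeg_bview: "vdeg (bview G l v) = deg G v"
  by (cases l) auto

lemma bview_eq_deg: "bview G l u = bview G l v \<Longrightarrow> deg G u = deg G v"
  by (metis vdeg_bview)

fun wk :: "pgraph \<Rightarrow> nat \<Rightarrow> nat list \<Rightarrow> nat" where
  "wk G v [] = v" | "wk G v (p # ps) = wk G (nbr G v p) ps"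

fun wv :: "pgraph \<Rightarrow> nat \<Rightarrow> nat list \<Rightarrow> bool" where
  "wv G v [] = True" | "wv G v (p # ps) = (p < deg G v \<and> wv G (nbr G v p) ps)"

lemma anchor:
  assumes "wf_pgraph G" "v < gsize G" "w < gsize G" "bview G l v = bview G l w"
    "wv G v ps" "length ps \<le> l"
    "\<And>z'. z' < gsize G \<Longrightarrow> bview G (l - length ps) z' = bview G (l - length ps) (wk G v ps) \<Longrightarrow> z' = wk G v ps"
  shows "v = w"
  using assms(2-7)
proof (induction ps arbitrary: v w l)
  case Nil
  then show ?case by (metis diff_zero list.size(3) wk.simps(1))
next
  case (Cons p ps)
  then obtain m where l: "l = Suc m" by (cases l) auto
  have p: "p < deg G v" using Cons.prems(4) by simp
  note e = bview_Suc_eq[OF Cons.prems(3)[unfolded l]]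
  have pw: "p < deg G w" using p e(1) by simp
  have a1: "adj G v (nbr G v p)" using W2[OF assms(1) Cons.prems(1) p] by simp
  have a2: "adj G w (nbr G w p)" using W2[OF assms(1) Cons.prems(2) pw] by simp
  have z: "nbr G v p = nbr G w p"
  proof (rule Cons.IH)
    show "nbr G v p < gsize G" "nbr G w p < gsize G" using a1 a2 wfD(2)[OF assms(1)] by auto
    show "bview G m (nbr G v p) = bview G m (nbr G w p)" using e(2)[OF p] by simp
    show "wv G (nbr G v p) ps" using Cons.prems(4) by simp
    show "length ps \<le> m" using Cons.prems(5) l by simp
    show "\<And>z'. z' < gsize G \<Longrightarrow> bview G (m - length ps) z' = bview G (m - length ps) (wk G (nbr G v p) ps) \<Longrightarrow>
          z' = wk G (nbr G v p) ps" using Cons.prems(6) l by simp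
  qed
  have pe: "port G (nbr G v p) v = port G (nbr G w p) w" using e(2)[OF p] by simp
  have "v = nbr G (nbr G v p) (port G (nbr G v p) v)"
    using W1(1)[OF assms(1) wfD(3)[OF assms(1) a1]] by simp
  also have "\<dots> = nbr G (nbr G w p) (port G (nbr G w p) w)" using z pe by simp
  also have "\<dots> = w" using W1(1)[OF assms(1) wfD(3)[OF assms(1) a2]] by simp
  finally show ?case .
qed




fun R :: "pgraph \<Rightarrow> nat \<Rightarrow> nat \<Rightarrow> nat set" where
  "R G 0 v = {v}"
| "R G (Suc k) v = insert v (\<Union> {R G k w | w. adj G v w})"

lemma R_self: "v \<in> R G k v"
  by (cases k) auto

lemma R_hd:
  assumes "\<And>u w. adj G u w \<Longrightarrow> hdf u \<le> Suc (hdf w)"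
  shows "x \<in> R G k v \<Longrightarrow> hdf v \<le> hdf x + k"
proof (induction k arbitrary: v)
  case 0 then show ?case by simp
next
  case (Suc k)
  then show ?case
  proof (cases "x = v")
    case False
    then obtain w where "adj G v w" "x \<in> R G k w" using Suc.prems by auto
    then show ?thesis using Suc.IH assms by fastforce
  qed simp
qed

lemma nbr_eq: "adj G2 = adj G1 \<Longrightarrow> port G2 v = port G1 v \<Longrightarrow> nbr G2 v p = nbr G1 v p"
  by (simp add: nbr_def)

lemma deg_eq: "adj G2 = adj G1 \<Longrightarrow> deg G2 v = deg G1 v"
  by (simp add: deg_def)

lemma far_eq:
  assumes "wf_pgraph G1" "adj G2 = adj G1" "\<And>u. u \<noteq> hH \<Longrightarrow> port G2 u = port G1 u"
  shows "v < gsize G1 \<Longrightarrow> hH \<notin> R G1 l v \<Longrightarrow> bview G1 l v = bview G2 l v"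
proof (induction l arbitrary: v)
  case 0 then show ?case using deg_eq[OF assms(2)] by simp
next
  case (Suc l)
  have vh: "v \<noteq> hH" using Suc.prems(2) by auto
  have d: "deg G2 v = deg G1 v" using deg_eq[OF assms(2)] .
  have "\<forall>p\<in>set [0..<deg G1 v]. (p, port G1 (nbr G1 v p) v, bview G1 l (nbr G1 v p)) =
          (p, port G2 (nbr G2 v p) v, bview G2 l (nbr G2 v p))"
  proof
    fix p assume "p \<in> set [0..<deg G1 v]"
    then have p: "p < deg G1 v" by simp
    have ne: "nbr G2 v p = nbr G1 v p" using nbr_eq[OF assms(2) assms(3)[OF vh]] .
    let ?z = "nbr G1 v p"
    have a: "adj G1 v ?z" using W2[OF assms(1) Suc.prems(1) p] by simp
    have sub: "R G1 l ?z \<subseteq> R G1 (Suc l) v" using a by auto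
    have zh: "?z \<noteq> hH" using sub R_self[of ?z G1 l] Suc.prems(2) by auto
    have zl: "?z < gsize G1" using wfD(2)[OF assms(1) a] by simp
    have "bview G1 l ?z = bview G2 l ?z" using Suc.IH[OF zl] sub Suc.prems(2) by auto
    then show "(p, port G1 ?z v, bview G1 l ?z) = (p, port G2 (nbr G2 v p) v, bview G2 l (nbr G2 v p))"
      using ne assms(3)[OF zh] by simp
  qed
  then show ?case using d by simp
qed

lemma OUT:
  assumes "\<And>r. r \<le> t \<Longrightarrow> bview G1 r v = bview G2 r v"
    "\<exists>r\<le>t. A s r (bview G1 r v) \<noteq> None"
  shows "node_output A s G1 v = node_output A s G2 v"
proof -
  let ?P1 = "\<lambda>r. A s r (bview G1 r v) \<noteq> None"
  let ?P2 = "\<lambda>r. A s r (bview G2 r v) \<noteq> None"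
  obtain r where r: "r \<le> t" "?P1 r" using assms(2) by auto
  define r0 where "r0 = (LEAST r. ?P1 r)"
  have p0: "?P1 r0" unfolding r0_def using r(2) by (rule LeastI)
  have r0t: "r0 \<le> t" using Least_le[of ?P1 r] r unfolding r0_def by simp
  have "(LEAST r. ?P2 r) = r0"
  proof (rule Least_equality)
    show "?P2 r0" using p0 assms(1)[OF r0t] by simp
    fix m assume m: "?P2 m"
    show "r0 \<le> m"
    proof (rule ccontr)
      assume "\<not> r0 \<le> m"
      then have "m < r0" by simp
      then have "\<not> ?P1 m" unfolding r0_def using not_less_Least by blast
      moreover have "m \<le> t" using \<open>m < r0\<close> r0t by simp
      ultimately show False using m assms(1) by simp
    qed
  qed
  then have "output_round A s G2 v = output_round A s G1 v"
    unfolding output_round_def r0_def by simp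
  then show ?thesis unfolding node_output_def using assms(1) r0t
    by (simp add: output_round_def r0_def)
qed

lemma F1:
  assumes "wf_pgraph G1" "adj G2 = adj G1" "\<And>u. u \<noteq> hH \<Longrightarrow> port G2 u = port G1 u"
    "\<And>u w. adj G1 u w \<Longrightarrow> u \<noteq> hH \<Longrightarrow> w \<noteq> hH \<Longrightarrow> br u = br w"
    "\<And>u. adj G1 u hH \<Longrightarrow> br u = k \<Longrightarrow> port G1 hH u \<noteq> port G2 hH u"
  shows "follow G1 v ps = Some vs \<Longrightarrow> hH \<in> set vs \<Longrightarrow> v \<noteq> hH \<Longrightarrow> v < gsize G1 \<Longrightarrow> br v = k
     \<Longrightarrow> follow G2 v ps = None"
proof (induction ps arbitrary: v vs)
  case Nil then show ?case by auto
next
  case (Cons pq ps)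
  obtain p q where pq: "pq = (p, q)" by (cases pq)
  let ?z = "nbr G1 v p"
  have c1: "p < deg G1 v" "port G1 ?z v = q" using Cons.prems(1) pq by (auto split: if_splits)
  obtain vs' where vs': "follow G1 ?z ps = Some vs'" "vs = v # vs'" using Cons.prems(1) pq c1 by auto
  have ne: "nbr G2 v p = ?z" using nbr_eq[OF assms(2) assms(3)[OF Cons.prems(3)]] .
  have a: "adj G1 v ?z" using W2[OF assms(1) Cons.prems(4) c1(1)] by simp
  show ?case
  proof (cases "?z = hH")
    case True
    have "port G2 ?z v \<noteq> q" using assms(5)[of v] a True c1(2) Cons.prems(5) by auto
    then show ?thesis using pq ne by simp
  next
    case False
    have "follow G2 ?z ps = None"
    proof (rule Cons.IH[OF vs'(1)])
      show "hH \<in> set vs'" using Cons.prems(2,3) vs'(2) by auto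
      show "?z \<noteq> hH" by fact
      show "?z < gsize G1" using wfD(2)[OF assms(1) a] by simp
      show "br ?z = k" using assms(4)[OF a Cons.prems(3) False] Cons.prems(5) by simp
    qed
    then show ?thesis using pq ne by simp
  qed
qed

lemma F2:
  assumes "wf_pgraph G"
    "\<And>u w. adj G u w \<Longrightarrow> u \<noteq> hH \<Longrightarrow> w \<noteq> hH \<Longrightarrow> br u = br w"
  shows "follow G v ps = Some vs \<Longrightarrow> hH \<notin> set vs \<Longrightarrow> v < gsize G \<Longrightarrow> x \<in> set vs \<Longrightarrow> br x = br v"
proof (induction ps arbitrary: v vs)
  case Nil then show ?case by auto
next
  case (Cons pq ps)
  obtain p q where pq: "pq = (p, q)" by (cases pq)
  let ?z = "nbr G v p"
  have c1: "p < deg G v" "port G ?z v = q" using Cons.prems(1) pq by (auto split: if_splits)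
  obtain vs' where vs': "follow G ?z ps = Some vs'" "vs = v # vs'" using Cons.prems(1) pq c1 by auto
  have a: "adj G v ?z" using W2[OF assms(1) Cons.prems(3) c1(1)] by simp
  have zv: "?z \<in> set vs'" using vs'(1) by (cases ps) (auto split: if_splits prod.splits)
  show ?case
  proof (cases "x = v")
    case False
    then have "x \<in> set vs'" using Cons.prems(4) vs'(2) by simp
    then have "br x = br ?z"
      using Cons.IH[OF vs'(1)] Cons.prems(2) vs'(2) wfD(2)[OF assms(1) a] by auto
    also have "\<dots> = br v" using assms(2)[OF a] Cons.prems(2) vs'(2) zv by (metis list.set_intros(1,2))
    finally show ?thesis .
  qed simp
qed




lemma follow_ne: "follow G v ps = Some vs \<Longrightarrow> vs \<noteq> []"
  by (induction ps arbitrary: v vs) (auto split: if_splits)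

lemma incompat:
  assumes wf1: "wf_pgraph G1" and gs: "gsize G2 = gsize G1" and ad: "adj G2 = adj G1"
    and po: "\<And>u. u \<noteq> hH \<Longrightarrow> port G2 u = port G1 u"
    and brr: "\<And>u w. adj G1 u w \<Longrightarrow> u \<noteq> hH \<Longrightarrow> w \<noteq> hH \<Longrightarrow> br u = br w"
    and far: "\<And>x r. x \<in> {a, b} \<Longrightarrow> r \<le> t \<Longrightarrow> hH \<notin> R G1 r x"
    and nh: "a \<noteq> hH" "b \<noteq> hH" and lt: "a < gsize G1" "b < gsize G1"
    and dif: "\<And>x u. x \<in> {a, b} \<Longrightarrow> adj G1 u hH \<Longrightarrow> br u = br x \<Longrightarrow> port G1 hH u \<noteq> port G2 hH u"
    and E1: "elects_in_time A G1 t s" and E2: "elects_in_time A G2 t s"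
  shows "br a = br b"
proof -
  obtain l1 where l1: "\<forall>v<gsize G1. simple_path_to G1 v (node_output A s G1 v) l1"
    using E1 unfolding elects_in_time_def by auto
  obtain l2 where l2: "\<forall>v<gsize G2. simple_path_to G2 v (node_output A s G2 v) l2"
    using E2 unfolding elects_in_time_def by auto
  have key: "br l1 = br x" if x: "x \<in> {a, b}" for x
  proof -
    have xl: "x < gsize G1" and xh: "x \<noteq> hH" using x lt nh by auto
    have "node_output A s G1 x = node_output A s G2 x"
    proof (rule OUT)
      show "\<And>r. r \<le> t \<Longrightarrow> bview G1 r x = bview G2 r x"
        using far_eq[OF wf1 ad po xl] far[OF x] by blast
      show "\<exists>r\<le>t. A s r (bview G1 r x) \<noteq> None" using E1 xl unfolding elects_in_time_def by auto
    qed
    moreover obtain vs2 where "follow G2 x (node_output A s G2 x) = Some vs2"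
      using l2 xl gs unfolding simple_path_to_def by auto
    moreover obtain vs where vs: "follow G1 x (node_output A s G1 x) = Some vs" "last vs = l1"
      using l1 xl unfolding simple_path_to_def by auto
    ultimately have hv: "hH \<notin> set vs"
      using F1[OF wf1 ad po brr, where k="br x" and v=x] dif[OF x] xh xl by fastforce
    have "last vs \<in> set vs" using follow_ne[OF vs(1)] by simp
    then show ?thesis using F2[OF wf1 brr vs(1) hv xl] vs(2) by simp
  qed
  show ?thesis using key[of a] key[of b] by simp
qed




fun idx :: "'a \<Rightarrow> 'a list \<Rightarrow> nat" where
  "idx x [] = 0" | "idx x (y # ys) = (if x = y then 0 else Suc (idx x ys))"

lemma idx_in: "x \<in> set xs \<Longrightarrow> idx x xs < length xs \<and> xs ! idx x xs = x"
  by (induction xs) auto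

lemma idx_nth: "distinct xs \<Longrightarrow> p < length xs \<Longrightarrow> idx (xs ! p) xs = p"
proof (induction xs arbitrary: p)
  case Nil then show ?case by simp
next
  case (Cons y ys) then show ?case by (cases p) auto
qed

definition mkG :: "'a set \<Rightarrow> ('a \<Rightarrow> 'a list) \<Rightarrow> ('a \<Rightarrow> nat) \<Rightarrow> pgraph" where
  "mkG V nl enc = \<lparr>gsize = card V,
     adj = (\<lambda>u v. u < card V \<and> v < card V \<and> inv_into V enc v \<in> set (nl (inv_into V enc u))),
     port = (\<lambda>u v. if u < card V then idx (inv_into V enc v) (nl (inv_into V enc u)) else 0)\<rparr>"

locale tg =
  fixes V :: "'a set" and nl :: "'a \<Rightarrow> 'a list" and enc :: "'a \<Rightarrow> nat" and r :: 'a
  assumes finV: "finite V" and bij: "bij_betw enc V {0..<card V}" and rV: "r \<in> V"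
    and dist: "\<And>x. x \<in> V \<Longrightarrow> distinct (nl x)"
    and sub: "\<And>x. x \<in> V \<Longrightarrow> set (nl x) \<subseteq> V"
    and irr: "\<And>x. x \<in> V \<Longrightarrow> x \<notin> set (nl x)"
    and sym: "\<And>x y. x \<in> V \<Longrightarrow> y \<in> set (nl x) \<Longrightarrow> x \<in> set (nl y)"
    and conn: "\<And>x. x \<in> V \<Longrightarrow> (\<lambda>a b. b \<in> set (nl a))\<^sup>*\<^sup>* x r"
begin

abbreviation "G \<equiv> mkG V nl enc"

lemma dec_enc: "x \<in> V \<Longrightarrow> inv_into V enc (enc x) = x"
  using bij by (simp add: bij_betw_def inv_into_f_f)

lemma enc_lt: "x \<in> V \<Longrightarrow> enc x < card V"
  using bij by (auto simp: bij_betw_def)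

lemma enc_surj: "u < card V \<Longrightarrow> \<exists>x\<in>V. u = enc x"
  using bij by (auto simp: bij_betw_def)

lemma enc_inj: "x \<in> V \<Longrightarrow> y \<in> V \<Longrightarrow> enc x = enc y \<longleftrightarrow> x = y"
  using bij by (auto simp: bij_betw_def inj_on_def)

lemma gsize_G: "gsize G = card V" by (simp add: mkG_def)

lemma adj_enc: "x \<in> V \<Longrightarrow> y \<in> V \<Longrightarrow> adj G (enc x) (enc y) \<longleftrightarrow> y \<in> set (nl x)"
  by (simp add: mkG_def dec_enc enc_lt)

lemma port_enc: "x \<in> V \<Longrightarrow> y \<in> V \<Longrightarrow> port G (enc x) (enc y) = idx y (nl x)"
  by (simp add: mkG_def dec_enc enc_lt)

lemma adj_G_iff: "adj G u w \<longleftrightarrow> (\<exists>x\<in>V. \<exists>y\<in>V. u = enc x \<and> w = enc y \<and> y \<in> set (nl x))"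
proof
  assume a: "adj G u w"
  then have "u < card V" "w < card V" by (auto simp: mkG_def)
  then obtain x y where "x \<in> V" "y \<in> V" "u = enc x" "w = enc y" using enc_surj by metis
  then show "\<exists>x\<in>V. \<exists>y\<in>V. u = enc x \<and> w = enc y \<and> y \<in> set (nl x)" using a adj_enc by blast
qed (auto simp: adj_enc)

lemma nbrs_enc: "x \<in> V \<Longrightarrow> {w. adj G (enc x) w} = enc ` set (nl x)"
  using sub by (auto simp: adj_G_iff enc_inj)

lemma deg_enc: "x \<in> V \<Longrightarrow> deg G (enc x) = length (nl x)"
proof -
  assume x: "x \<in> V"
  have "inj_on enc (set (nl x))" using bij sub[OF x] by (auto simp: bij_betw_def inj_on_def)
  then show ?thesis unfolding deg_def nbrs_enc[OF x]
    by (simp add: card_image distinct_card dist[OF x])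
qed

lemma nbr_enc:
  assumes x: "x \<in> V" and p: "p < length (nl x)"
  shows "nbr G (enc x) p = enc (nl x ! p)"
  unfolding nbr_def
proof (rule the_equality)
  have y: "nl x ! p \<in> V" using sub[OF x] p by auto
  show "adj G (enc x) (enc (nl x ! p)) \<and> port G (enc x) (enc (nl x ! p)) = p"
    using x y p by (simp add: adj_enc port_enc idx_nth dist)
  fix w assume w: "adj G (enc x) w \<and> port G (enc x) w = p"
  from w obtain y where "y \<in> V" "w = enc y" "y \<in> set (nl x)" using adj_G_iff x enc_inj by metis
  then show "w = enc (nl x ! p)" using w x idx_in[of y "nl x"] by (simp add: port_enc)
qed

lemma wf: "wf_pgraph G"
  unfolding wf_pgraph_def
proof (intro conjI)
  show "1 \<le> gsize G" using rV finV by (simp add: gsize_G Suc_le_eq card_gt_0_iff; blast)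
  show "\<forall>u w. adj G u w \<longrightarrow> u < gsize G \<and> w < gsize G" by (auto simp: mkG_def)
  show "\<forall>u w. adj G u w \<longrightarrow> adj G w u" using sym by (auto simp: adj_G_iff)
  show "\<forall>u. \<not> adj G u u" using irr by (auto simp: adj_G_iff enc_inj)
  show "\<forall>v<gsize G. bij_betw (port G v) {w. adj G v w} {0..<deg G v}"
  proof (intro allI impI)
  fix v assume "v < gsize G"
  then obtain x where x: "x \<in> V" "v = enc x" using enc_surj gsize_G by auto
  show "bij_betw (port G v) {w. adj G v w} {0..<deg G v}"
    unfolding bij_betw_def
  proof
    have s: "set (nl x) \<subseteq> V" using sub[OF x(1)] .
    show "inj_on (port G v) {w. adj G v w}"
      unfolding x(2) nbrs_enc[OF x(1)] inj_on_def using s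
      by (auto simp: port_enc x(1) subsetD) (metis idx_in)
    show "port G v ` {w. adj G v w} = {0..<deg G v}"
      unfolding x(2) nbrs_enc[OF x(1)] deg_enc[OF x(1)]
    proof
      show "port G (enc x) ` enc ` set (nl x) \<subseteq> {0..<length (nl x)}"
        using s by (auto simp: port_enc x(1) idx_in)
      show "{0..<length (nl x)} \<subseteq> port G (enc x) ` enc ` set (nl x)"
      proof
        fix p assume "p \<in> {0..<length (nl x)}"
        then have p: "p < length (nl x)" by simp
        moreover have "nl x ! p \<in> V" using s p by auto
        ultimately have "port G (enc x) (enc (nl x ! p)) = p" using x(1)
          by (simp add: port_enc idx_nth dist)
        then show "p \<in> port G (enc x) ` enc ` set (nl x)" using p by (metis image_eqI nth_mem)
      qed
    qed
  qed
  qed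
  have toR: "(adj G)\<^sup>*\<^sup>* (enc x) (enc r)" if x: "x \<in> V" for x
  proof -
    have "(\<lambda>a b. b \<in> set (nl a))\<^sup>*\<^sup>* x r" using conn[OF x] .
    then show ?thesis using x
    proof (induction rule: converse_rtranclp_induct)
      case base then show ?case by simp
    next
      case (step y z)
      then have "z \<in> V" using sub by auto
      then show ?case using step by (meson adj_enc converse_rtranclp_into_rtranclp)
    qed
  qed
  have symA: "(adj G)\<^sup>*\<^sup>* a b \<Longrightarrow> (adj G)\<^sup>*\<^sup>* b a" for a b
  proof (induction rule: rtranclp_induct)
    case (step y z)
    have "adj G z y" using step(2) sym by (auto simp: adj_G_iff)
    then show ?case using step(3) by (meson converse_rtranclp_into_rtranclp)
  qed simp
  show "\<forall>u<gsize G. \<forall>w<gsize G. (adj G)\<^sup>*\<^sup>* u w"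
  proof (intro allI impI)
    fix u w assume u: "u < gsize G" and w: "w < gsize G"
    obtain x y where "x \<in> V" "y \<in> V" "u = enc x" "w = enc y" using u w enc_surj gsize_G by metis
    then show "(adj G)\<^sup>*\<^sup>* u w" using toR symA by (meson rtranclp_trans)
  qed
qed

end




datatype nd = Hb | Pp nat | Qq nat | Ww nat nat | Cc nat | Yy nat nat

fun valid :: "nat \<Rightarrow> nat \<Rightarrow> nd \<Rightarrow> bool" where
  "valid h B Hb = True"
| "valid h B (Pp t) = (1 \<le> t \<and> t \<le> h)"
| "valid h B (Qq t) = (1 \<le> t \<and> t \<le> h)"
| "valid h B (Ww j t) = (j < 2^B \<and> 1 \<le> t \<and> t \<le> h)"
| "valid h B (Cc j) = (j < 2^B)"
| "valid h B (Yy j i) = (j < 2^B \<and> i < 2*B)"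

definition VS :: "nat \<Rightarrow> nat \<Rightarrow> nd set" where "VS h B = {x. valid h B x}"

definition pt :: "nat \<Rightarrow> nat" where "pt i = (if even i then Suc i else i - 1)"

fun nl :: "nat \<Rightarrow> nat \<Rightarrow> (nat \<Rightarrow> nat) \<Rightarrow> (nat \<Rightarrow> nat set) \<Rightarrow> nd \<Rightarrow> nd list" where
  "nl h B g code Hb = map (\<lambda>p. Ww (g p) 1) [0..<2^B] @ [Pp 1, Qq 1]"
| "nl h B g code (Pp t) = (if t = 1 then Hb else Pp (t - 1)) # (if t < h then [Pp (Suc t)] else [])"
| "nl h B g code (Qq t) = (if t = 1 then Hb else Qq (t - 1)) # (if t < h then [Qq (Suc t)] else [])"
| "nl h B g code (Ww j t) = [if t = 1 then Hb else Ww j (t - 1), if t < h then Ww j (Suc t) else Cc j]"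
| "nl h B g code (Cc j) = Ww j h # map (Yy j) [0..<2*B]"
| "nl h B g code (Yy j i) = Cc j # (if i div 2 \<in> code j then [Yy j (pt i)] else [])"

lemma VS_sub: "VS h B \<subseteq> {Hb} \<union> Pp ` {..h} \<union> Qq ` {..h} \<union> (\<lambda>(j,t). Ww j t) ` ({..<2^B} \<times> {..h})
   \<union> Cc ` {..<2^B} \<union> (\<lambda>(j,i). Yy j i) ` ({..<2^B} \<times> {..<2*B})"
proof
  fix x assume "x \<in> VS h B"
  then show "x \<in> {Hb} \<union> Pp ` {..h} \<union> Qq ` {..h} \<union> (\<lambda>(j,t). Ww j t) ` ({..<2^B} \<times> {..h})
   \<union> Cc ` {..<2^B} \<union> (\<lambda>(j,i). Yy j i) ` ({..<2^B} \<times> {..<2*B})"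
    by (cases x) (auto simp: VS_def image_iff)
qed

lemma finite_VS: "finite (VS h B)"
  by (rule finite_subset[OF VS_sub]) auto

lemma card_VS_le: "card (VS h B) \<le> 3 + 2*h + 2^B * (h + 2 + 2*B)"
proof -
  let ?A1 = "{Hb} \<union> Pp ` {..h}" and ?A2 = "Qq ` {..h}" and ?A3 = "(\<lambda>(j,t). Ww j t) ` ({..<(2::nat)^B} \<times> {..h})"
  let ?A4 = "Cc ` {..<(2::nat)^B}" and ?A5 = "(\<lambda>(j,i). Yy j i) ` ({..<(2::nat)^B} \<times> {..<2*B})"
  have "card (VS h B) \<le> card (?A1 \<union> ?A2 \<union> ?A3 \<union> ?A4 \<union> ?A5)"
    by (rule card_mono) (use VS_sub in auto)
  also have "\<dots> \<le> card ?A1 + card ?A2 + card ?A3 + card ?A4 + card ?A5"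
    by (meson add_mono card_Un_le le_refl order_trans)
  also have "card ?A1 \<le> 1 + card (Pp ` {..h})" by (simp add: card_insert_if)
  also have "card (Pp ` {..h}) \<le> h + 1" using card_image_le[of "{..h}" Pp] by simp
  also have "card ?A2 \<le> h + 1" using card_image_le[of "{..h}" Qq] by simp
  also have "card ?A3 \<le> 2^B * (h+1)" using card_image_le[of "{..<(2::nat)^B} \<times> {..h}" "\<lambda>(j,t). Ww j t"]
    by (simp add: card_cartesian_product)
  also have "card ?A4 \<le> 2^B" using card_image_le[of "{..<(2::nat)^B}" Cc] by simp
  also have "card ?A5 \<le> 2^B * (2*B)" using card_image_le[of "{..<(2::nat)^B} \<times> {..<2*B}" "\<lambda>(j,i). Yy j i"]
    by (simp add: card_cartesian_product)
  finally show ?thesis by (simp add: algebra_simps)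
qed

lemma card_VS_ge: "2^B \<le> card (VS h B)"
proof -
  have "Cc ` {..<2^B} \<subseteq> VS h B" by (auto simp: VS_def)
  then have "card (Cc ` {..<(2::nat)^B}) \<le> card (VS h B)" using finite_VS by (rule card_mono[rotated])
  moreover have "card (Cc ` {..<(2::nat)^B}) = 2^B" by (subst card_image) (auto simp: inj_on_def)
  ultimately show ?thesis by simp
qed




locale cons =
  fixes h B :: nat and g :: "nat \<Rightarrow> nat" and code :: "nat \<Rightarrow> nat set"
  assumes h2: "2 \<le> h" and B1: "1 \<le> B" and gp: "g permutes {0..<2^B}"
    and cinj: "inj_on code {0..<2^B}" and csub: "\<And>j. j < 2^B \<Longrightarrow> code j \<subseteq> {0..<B}"
begin

abbreviation "N \<equiv> nl h B g code"

lemma g_lt: "p < 2^B \<Longrightarrow> g p < 2^B"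
  using permutes_in_image[OF gp] by simp

lemma g_inj: "inj_on g {0..<2^B}"
  using permutes_inj_on[OF gp] .

lemma g_surj: "j < 2^B \<Longrightarrow> \<exists>p<2^B. g p = j"
  using permutes_image[OF gp] by (metis atLeastLessThan_iff imageE zero_le)

lemma pt_lt: "i < 2*B \<Longrightarrow> pt i < 2*B" by (auto simp: pt_def)
lemma pt_pt: "pt (pt i) = i" by (auto simp: pt_def)
lemma pt_ne: "pt i \<noteq> i" by (cases i) (auto simp: pt_def)
lemma pt_div: "pt i div 2 = i div 2" by (auto simp: pt_def elim!: evenE oddE)

lemma Hb_mem: "y \<in> set (N Hb) \<longleftrightarrow> (\<exists>j<2^B. y = Ww j 1) \<or> y = Pp 1 \<or> y = Qq 1"
proof
  assume "y \<in> set (N Hb)" then show "(\<exists>j<2^B. y = Ww j 1) \<or> y = Pp 1 \<or> y = Qq 1"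
    using g_lt by auto
next
  assume "(\<exists>j<2^B. y = Ww j 1) \<or> y = Pp 1 \<or> y = Qq 1"
  moreover have "Ww j 1 \<in> set (N Hb)" if jl: "j < 2^B" for j
  proof -
    obtain p where "p < 2^B" "g p = j" using g_surj jl by blast
    then show ?thesis by force
  qed
  ultimately show "y \<in> set (N Hb)" by auto
qed

lemma Ww1_in: "j < 2^B \<Longrightarrow> Ww j (Suc 0) \<in> (\<lambda>x. Ww (g x) (Suc 0)) ` {0..<2 ^ B}"
  using Hb_mem[of "Ww j 1"] by auto

lemma tg_inst:
  assumes "bij_betw enc (VS h B) {0..<card (VS h B)}"
  shows "tg (VS h B) N enc Hb"
proof
  show "finite (VS h B)" by (rule finite_VS)
  show "bij_betw enc (VS h B) {0..<card (VS h B)}" by fact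
  show "Hb \<in> VS h B" by (simp add: VS_def)
  fix x assume x: "x \<in> VS h B"
  have i1: "inj_on (\<lambda>p. Ww (g p) (Suc 0)) {0..<2 ^ B}" using g_inj by (auto simp: inj_on_def)
  have i2: "inj_on (Yy j) I" for j I by (auto simp: inj_on_def)
  show "distinct (N x)" using x i1 i2
    by (cases x) (auto simp: VS_def distinct_map pt_ne)
  show "set (N x) \<subseteq> VS h B" using x h2 g_lt
    by (cases x) (auto simp: VS_def pt_lt)
  show "x \<notin> set (N x)" using x
    by (cases x) (auto simp: VS_def pt_ne[symmetric])
  {
    fix y assume y: "y \<in> set (N x)"
    show "x \<in> set (N y)" using x y h2
      by (cases x) (auto simp: VS_def Ww1_in pt_pt pt_div split: if_splits)
  }
  show "(\<lambda>a b. b \<in> set (N a))\<^sup>*\<^sup>* x Hb"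
  proof -
    let ?r = "\<lambda>a b. b \<in> set (N a)"
    have P: "?r\<^sup>*\<^sup>* (Pp t) Hb" if "1 \<le> t" for t using that
    proof (induction t)
      case (Suc t) then show ?case
        by (cases "t = 0") (auto intro: converse_rtranclp_into_rtranclp)
    qed simp
    have Q: "?r\<^sup>*\<^sup>* (Qq t) Hb" if "1 \<le> t" for t using that
    proof (induction t)
      case (Suc t) then show ?case
        by (cases "t = 0") (auto intro: converse_rtranclp_into_rtranclp)
    qed simp
    have W: "?r\<^sup>*\<^sup>* (Ww j t) Hb" if "1 \<le> t" for t j using that
    proof (induction t)
      case (Suc t) then show ?case
        by (cases "t = 0") (auto intro: converse_rtranclp_into_rtranclp)
    qed simp
    have C: "?r\<^sup>*\<^sup>* (Cc j) Hb" for j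
      using W[of h j] h2 by (auto intro: converse_rtranclp_into_rtranclp)
    have Y: "?r\<^sup>*\<^sup>* (Yy j i) Hb" for j i
      using C[of j] by (auto intro: converse_rtranclp_into_rtranclp)
    show ?thesis using x P Q W C Y by (cases x) (auto simp: VS_def)
  qed
qed

end




locale cons2 = cons +
  fixes enc :: "nd \<Rightarrow> nat"
  assumes encb: "bij_betw enc (VS h B) {0..<card (VS h B)}"
begin

sublocale T: tg "VS h B" N enc Hb by (rule tg_inst[OF encb])

abbreviation "GG \<equiv> mkG (VS h B) N enc"
abbreviation "n \<equiv> card (VS h B)"

lemma vHb[simp]: "Hb \<in> VS h B" by (simp add: VS_def)
lemma vCc: "j < 2^B \<Longrightarrow> Cc j \<in> VS h B" by (simp add: VS_def)
lemma vYy: "j < 2^B \<Longrightarrow> i < 2*B \<Longrightarrow> Yy j i \<in> VS h B" by (simp add: VS_def)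

lemma len_le2: "x \<in> VS h B \<Longrightarrow> x \<noteq> Hb \<Longrightarrow> (\<forall>j. x \<noteq> Cc j) \<Longrightarrow> length (N x) \<le> 2"
  by (cases x) auto

lemma B_even: "even ((2::nat)^B + 2)" using B1 by simp

lemma hub_len: "x \<in> VS h B \<Longrightarrow> length (N x) = 2^B + 2 \<Longrightarrow> x = Hb"
proof -
  assume x: "x \<in> VS h B" and l: "length (N x) = 2^B + 2"
  have "(2::nat)^B \<ge> 1" by simp
  show "x = Hb"
  proof (cases x)
    case (Cc j)
    then have "2*B+1 = (2::nat)^B+2" using l by simp
    then have "even (2*B+1)" using B_even by (simp only:)
    then show ?thesis by simp
  qed (use x l len_le2[OF x] in auto)
qed

lemma cc_len: "x \<in> VS h B \<Longrightarrow> length (N x) = 2*B + 1 \<Longrightarrow> \<exists>k<2^B. x = Cc k"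
proof -
  assume x: "x \<in> VS h B" and l: "length (N x) = 2*B + 1"
  show ?thesis
  proof (cases x)
    case Hb
    then have "2*B+1 = (2::nat)^B+2" using l by simp
    then have "even (2*B+1)" using B_even by (simp only:)
    then show ?thesis by simp
  next
    case (Cc k) then show ?thesis using x by (simp add: VS_def)
  qed (use x l len_le2[OF x] B1 in auto)
qed

lemma nodes: "u < n \<Longrightarrow> \<exists>x\<in>VS h B. u = enc x" using T.enc_surj by blast

lemma uniq_hub: "z < n \<Longrightarrow> bview GG m z = bview GG m (enc Hb) \<Longrightarrow> z = enc Hb"
proof -
  assume z: "z < n" and e: "bview GG m z = bview GG m (enc Hb)"
  obtain x where x: "x \<in> VS h B" "z = enc x" using nodes[OF z] by auto
  have "deg GG z = deg GG (enc Hb)" using bview_eq_deg[OF e] .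
  then have "length (N x) = 2^B + 2" using x by (simp add: T.deg_enc)
  then have "x = Hb" by (rule hub_len[OF x(1)])
  then show ?thesis using x by simp
qed

lemma nbrC: "j < 2^B \<Longrightarrow> i < 2*B \<Longrightarrow> nbr GG (enc (Cc j)) (Suc i) = enc (Yy j i)"
  using T.nbr_enc[OF vCc, of j "Suc i"] by simp

lemma uniq_cc:
  assumes j: "j < 2^B" and m: "1 \<le> m" and z: "z < n" and e: "bview GG m z = bview GG m (enc (Cc j))"
  shows "z = enc (Cc j)"
proof -
  obtain m' where m': "m = Suc m'" using m by (cases m) auto
  note E = bview_Suc_eq[OF e[unfolded m']]
  obtain x where x: "x \<in> VS h B" "z = enc x" using nodes[OF z] by auto
  have "length (N x) = 2*B + 1" using E(1) x vCc[OF j] by (simp add: T.deg_enc)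
  then obtain k where k: "k < 2^B" "x = Cc k" using cc_len x by blast
  have "code k = code j"
  proof -
    have "i \<in> code k \<longleftrightarrow> i \<in> code j" if i: "i < B" for i
    proof -
      have p: "Suc (2*i) < deg GG z" using x k i by (simp add: T.deg_enc vCc)
      have "bview GG m' (nbr GG z (Suc (2*i))) = bview GG m' (nbr GG (enc (Cc j)) (Suc (2*i)))"
        using E(2)[OF p] by simp
      moreover have "nbr GG z (Suc (2*i)) = enc (Yy k (2*i))" using nbrC[of k "2*i"] k i x by simp
      moreover have "nbr GG (enc (Cc j)) (Suc (2*i)) = enc (Yy j (2*i))" using nbrC[of j "2*i"] j i by simp
      ultimately have "deg GG (enc (Yy k (2*i))) = deg GG (enc (Yy j (2*i)))"
        using bview_eq_deg by metis
      then show ?thesis using k j i T.deg_enc[OF vYy, of k "2*i"] T.deg_enc[OF vYy, of j "2*i"] by (simp split: if_splits)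
    qed
    then show ?thesis using csub[OF k(1)] csub[OF j] by auto
  qed
  then have "k = j" using cinj k j by (auto simp: inj_on_def)
  then show ?thesis using k x by simp
qed

lemma vP: "1 \<le> t \<Longrightarrow> t \<le> h \<Longrightarrow> Pp t \<in> VS h B" by (simp add: VS_def)
lemma vQ: "1 \<le> t \<Longrightarrow> t \<le> h \<Longrightarrow> Qq t \<in> VS h B" by (simp add: VS_def)
lemma vW: "j < 2^B \<Longrightarrow> 1 \<le> t \<Longrightarrow> t \<le> h \<Longrightarrow> Ww j t \<in> VS h B" by (simp add: VS_def)
lemma gsGG: "gsize GG = n" by (rule T.gsize_G)

lemma walkP: "1 \<le> t \<Longrightarrow> t \<le> h \<Longrightarrow> wv GG (enc (Pp t)) (replicate t 0) \<and> wk GG (enc (Pp t)) (replicate t 0) = enc Hb"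
proof (induction t)
  case 0 then show ?case by simp
next
  case (Suc t)
  have v: "Pp (Suc t) \<in> VS h B" using Suc.prems by (simp add: VS_def)
  have d: "0 < deg GG (enc (Pp (Suc t)))" using T.deg_enc[OF v] by simp
  have nb: "nbr GG (enc (Pp (Suc t))) 0 = enc (if t = 0 then Hb else Pp t)"
    using T.nbr_enc[OF v, of 0] by simp
  show ?case
  proof (cases "t = 0")
    case True then show ?thesis using d nb by simp
  next
    case False then show ?thesis using d nb Suc.IH Suc.prems by simp
  qed
qed

lemma walkQ: "1 \<le> t \<Longrightarrow> t \<le> h \<Longrightarrow> wv GG (enc (Qq t)) (replicate t 0) \<and> wk GG (enc (Qq t)) (replicate t 0) = enc Hb"
proof (induction t)
  case 0 then show ?case by simp
next
  case (Suc t)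
  have v: "Qq (Suc t) \<in> VS h B" using Suc.prems by (simp add: VS_def)
  have d: "0 < deg GG (enc (Qq (Suc t)))" using T.deg_enc[OF v] by simp
  have nb: "nbr GG (enc (Qq (Suc t))) 0 = enc (if t = 0 then Hb else Qq t)"
    using T.nbr_enc[OF v, of 0] by simp
  show ?case
  proof (cases "t = 0")
    case True then show ?thesis using d nb by simp
  next
    case False then show ?thesis using d nb Suc.IH Suc.prems by simp
  qed
qed

lemma walkW: "j < 2^B \<Longrightarrow> 1 \<le> t \<Longrightarrow> t \<le> h \<Longrightarrow> wv GG (enc (Ww j t)) (replicate t 0) \<and> wk GG (enc (Ww j t)) (replicate t 0) = enc Hb"
proof (induction t)
  case 0 then show ?case by simp
next
  case (Suc t)
  have v: "Ww j (Suc t) \<in> VS h B" using Suc.prems by (simp add: VS_def)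
  have d: "0 < deg GG (enc (Ww j (Suc t)))" using T.deg_enc[OF v] by simp
  have nb: "nbr GG (enc (Ww j (Suc t))) 0 = enc (if t = 0 then Hb else Ww j t)"
    using T.nbr_enc[OF v, of 0] by simp
  show ?case
  proof (cases "t = 0")
    case True then show ?thesis using d nb by simp
  next
    case False then show ?thesis using d nb Suc.IH Suc.prems by simp
  qed
qed

lemma anc_hub:
  assumes "u < n" "w < n" "bview GG h u = bview GG h w" "wv GG u ps" "wk GG u ps = enc Hb" "length ps \<le> h"
  shows "u = w"
  by (rule anchor[OF T.wf, of u w h ps]) (use assms uniq_hub in \<open>auto simp: gsGG\<close>)

lemma inj_h: "inj_on (bview GG h) {0..<n}"
proof (rule inj_onI)
  fix u w assume u: "u \<in> {0..<n}" and w: "w \<in> {0..<n}" and e: "bview GG h u = bview GG h w"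
  obtain x where x: "x \<in> VS h B" "u = enc x" using nodes u by auto
  have ul: "u < n" and wl: "w < n" using u w by auto
  show "u = w"
  proof (cases x)
    case Hb then show ?thesis using anc_hub[OF ul wl e, of "[]"] x by simp
  next
    case (Pp t) then show ?thesis using anc_hub[OF ul wl e, of "replicate t 0"] walkP[of t] x by (simp add: VS_def)
  next
    case (Qq t) then show ?thesis using anc_hub[OF ul wl e, of "replicate t 0"] walkQ[of t] x by (simp add: VS_def)
  next
    case (Ww j t) then show ?thesis using anc_hub[OF ul wl e, of "replicate t 0"] walkW[of j t] x by (simp add: VS_def)
  next
    case (Cc j)
    have j: "j < 2^B" using x Cc by (simp add: VS_def)
    show ?thesis
    proof (rule anchor[OF T.wf, of u w h "[]"])
      show "u < gsize GG" "w < gsize GG" using ul wl by (auto simp: gsGG)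
      show "bview GG h u = bview GG h w" by (rule e)
      fix z' assume "z' < gsize GG" "bview GG (h - length []) z' = bview GG (h - length []) (wk GG u [])"
      then show "z' = wk GG u []" using uniq_cc[OF j, of h z'] h2 x Cc by (simp add: gsGG)
    qed simp_all
  next
    case (Yy j i)
    have j: "j < 2^B" and i: "i < 2*B" using x Yy by (auto simp: VS_def)
    have nb: "nbr GG u 0 = enc (Cc j)" using T.nbr_enc[OF x(1), of 0] x Yy by simp
    have d: "0 < deg GG u" using T.deg_enc[OF x(1)] x Yy by simp
    show ?thesis
      by (rule anchor[OF T.wf, of u w h "[0]"]) (use ul wl e nb d uniq_cc[OF j, of "h - 1"] h2 in \<open>auto simp: gsGG\<close>)
  qed
qed

lemma PQ_eq: "l < t \<Longrightarrow> 1 \<le> t \<Longrightarrow> t \<le> h \<Longrightarrow> bview GG l (enc (Pp t)) = bview GG l (enc (Qq t))"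
proof (induction l arbitrary: t)
  case 0 then show ?case using T.deg_enc[OF vP] T.deg_enc[OF vQ] by simp
next
  case (Suc l)
  have vp: "Pp t \<in> VS h B" and vq: "Qq t \<in> VS h B" using Suc.prems by (auto simp: VS_def)
  have dp: "deg GG (enc (Pp t)) = deg GG (enc (Qq t))" using T.deg_enc[OF vp] T.deg_enc[OF vq] by simp
  have "\<forall>p\<in>set [0..<deg GG (enc (Pp t))].
     (p, port GG (nbr GG (enc (Pp t)) p) (enc (Pp t)), bview GG l (nbr GG (enc (Pp t)) p)) =
     (p, port GG (nbr GG (enc (Qq t)) p) (enc (Qq t)), bview GG l (nbr GG (enc (Qq t)) p))"
  proof
    fix p assume "p \<in> set [0..<deg GG (enc (Pp t))]"
    then have "p < deg GG (enc (Pp t))" by simp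
    then have p: "p < length (N (Pp t))" using T.deg_enc[OF vp] by (simp only:)
    have t2: "t \<noteq> 1" "2 \<le> t" using Suc.prems by auto
    show "(p, port GG (nbr GG (enc (Pp t)) p) (enc (Pp t)), bview GG l (nbr GG (enc (Pp t)) p)) =
     (p, port GG (nbr GG (enc (Qq t)) p) (enc (Qq t)), bview GG l (nbr GG (enc (Qq t)) p))"
    proof (cases p)
      case 0
      have a: "nbr GG (enc (Pp t)) p = enc (Pp (t - 1))" using T.nbr_enc[OF vp, of p] p 0 t2 by simp
      have b: "nbr GG (enc (Qq t)) p = enc (Qq (t - 1))" using T.nbr_enc[OF vq, of p] p 0 t2 by simp
      have v1: "Pp (t-1) \<in> VS h B" "Qq (t-1) \<in> VS h B" using t2 Suc.prems by (auto simp: VS_def)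
      have c: "port GG (enc (Pp (t-1))) (enc (Pp t)) = 1" "port GG (enc (Qq (t-1))) (enc (Qq t)) = 1"
        using T.port_enc[OF v1(1) vp] T.port_enc[OF v1(2) vq] t2 Suc.prems by auto
      have "bview GG l (enc (Pp (t-1))) = bview GG l (enc (Qq (t-1)))"
        using Suc.IH[of "t - 1"] Suc.prems t2 by simp
      then show ?thesis using a b c by simp
    next
      case (Suc p')
      then have p1: "p = 1" "t < h" using p by (auto split: if_splits)
      have a: "nbr GG (enc (Pp t)) p = enc (Pp (Suc t))" using T.nbr_enc[OF vp, of p] p p1 by simp
      have b: "nbr GG (enc (Qq t)) p = enc (Qq (Suc t))" using T.nbr_enc[OF vq, of p] p p1 by simp
      have v1: "Pp (Suc t) \<in> VS h B" "Qq (Suc t) \<in> VS h B" using p1 by (auto simp: VS_def)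
      have c: "port GG (enc (Pp (Suc t))) (enc (Pp t)) = 0" "port GG (enc (Qq (Suc t))) (enc (Qq t)) = 0"
        using T.port_enc[OF v1(1) vp] T.port_enc[OF v1(2) vq] t2 by auto
      have "bview GG l (enc (Pp (Suc t))) = bview GG l (enc (Qq (Suc t)))"
        using Suc.IH[of "Suc t"] \<open>Suc l < t\<close> p1 by simp
      then show ?thesis using a b c by simp
    qed
  qed
  then show ?case using dp by simp
qed

lemma feas: "feasible GG" using inj_h gsGG unfolding feasible_def by auto

lemma eidx: "election_index GG = h"
  unfolding election_index_def gsGG
proof (rule Least_equality)
  show "inj_on (bview GG h) {0..<n}" by (rule inj_h)
  fix l assume l: "inj_on (bview GG l) {0..<n}"
  show "h \<le> l"
  proof (rule ccontr)
    assume "\<not> h \<le> l"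
    then have "bview GG l (enc (Pp h)) = bview GG l (enc (Qq h))" using PQ_eq[of l h] h2 by simp
    moreover have "enc (Pp h) \<in> {0..<n}" "enc (Qq h) \<in> {0..<n}"
      using T.enc_lt vP vQ h2 by auto
    ultimately have "enc (Pp h) = enc (Qq h)" using l by (auto simp: inj_on_def)
    then show False using T.enc_inj vP vQ h2 by auto
  qed
qed

end




fun hdd :: "nat \<Rightarrow> nd \<Rightarrow> nat" where
  "hdd h Hb = 0" | "hdd h (Pp t) = t" | "hdd h (Qq t) = t" | "hdd h (Ww j t) = t"
| "hdd h (Cc j) = Suc h" | "hdd h (Yy j i) = Suc (Suc h)"

fun br' :: "nd \<Rightarrow> nat option" where
  "br' Hb = None" | "br' (Pp t) = None" | "br' (Qq t) = None" | "br' (Ww j t) = Some j"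
| "br' (Cc j) = Some j" | "br' (Yy j i) = Some j"

context cons2
begin

definition "hdN u = hdd h (inv_into (VS h B) enc u)"
definition "brN u = br' (inv_into (VS h B) enc u)"

lemma hdd_adj: "x \<in> VS h B \<Longrightarrow> y \<in> set (N x) \<Longrightarrow> hdd h x \<le> Suc (hdd h y)"
  using g_lt by (cases x) (auto simp: VS_def split: if_splits)

lemma br_adj: "x \<in> VS h B \<Longrightarrow> y \<in> set (N x) \<Longrightarrow> x \<noteq> Hb \<Longrightarrow> y \<noteq> Hb \<Longrightarrow> br' x = br' y"
  by (cases x) (auto simp: VS_def split: if_splits)

lemma hdN_adj: "adj GG u w \<Longrightarrow> hdN u \<le> Suc (hdN w)"
  using hdd_adj by (auto simp: T.adj_G_iff hdN_def T.dec_enc)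

lemma brN_adj: "adj GG u w \<Longrightarrow> u \<noteq> enc Hb \<Longrightarrow> w \<noteq> enc Hb \<Longrightarrow> brN u = brN w"
proof -
  assume a: "adj GG u w" and un: "u \<noteq> enc Hb" and wn: "w \<noteq> enc Hb"
  obtain x y where xy: "x \<in> VS h B" "y \<in> VS h B" "u = enc x" "w = enc y" "y \<in> set (N x)"
    using a by (auto simp: T.adj_G_iff)
  have "x \<noteq> Hb" "y \<noteq> Hb" using xy un wn by auto
  then show ?thesis using br_adj xy by (simp add: brN_def T.dec_enc)
qed

lemma far_cc: "j < 2^B \<Longrightarrow> r \<le> h \<Longrightarrow> enc Hb \<notin> R GG r (enc (Cc j))"
proof
  assume j: "j < 2^B" and r: "r \<le> h" and m: "enc Hb \<in> R GG r (enc (Cc j))"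
  have "hdN (enc (Cc j)) \<le> hdN (enc Hb) + r" using R_hd[of GG hdN, OF hdN_adj m] by blast
  then show False using r j by (simp add: hdN_def T.dec_enc vCc)
qed

lemma brN_Cc: "j < 2^B \<Longrightarrow> brN (enc (Cc j)) = Some j"
  by (simp add: brN_def T.dec_enc vCc)

lemma Cc_ne_hub: "j < 2^B \<Longrightarrow> enc (Cc j) \<noteq> enc Hb"
  using T.enc_inj[OF vCc vHb] by simp

lemma hub_port: "p < 2^B \<Longrightarrow> port GG (enc Hb) (enc (Ww (g p) 1)) = p"
proof -
  assume p: "p < 2^B"
  have v: "Ww (g p) 1 \<in> VS h B" using g_lt[OF p] h2 by (simp add: VS_def)
  have "N Hb ! p = Ww (g p) 1" using p by (simp add: nth_append)
  moreover have "p < length (N Hb)" using p by simp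
  ultimately show ?thesis using T.port_enc[OF vHb v] idx_nth[OF T.dist[OF vHb]] by metis
qed

lemma hub_nbr: "adj GG u (enc Hb) \<Longrightarrow> brN u = Some j \<Longrightarrow> u = enc (Ww j 1)"
proof -
  assume a: "adj GG u (enc Hb)" and b: "brN u = Some j"
  obtain x where x: "x \<in> VS h B" "u = enc x" "Hb \<in> set (N x)"
    using a by (auto simp: T.adj_G_iff T.enc_inj)
  then have "x \<in> set (N Hb)" using T.sym by blast
  then show ?thesis using b x by (auto simp: brN_def T.dec_enc)
qed

lemma setN: "set (N x) = set (nl h B (\<lambda>p. p) code x)"
proof (cases x)
  case Hb
  have gi: "g ` {0..<2^B} = {0..<2^B}" using permutes_image[OF gp] .
  have "(\<lambda>p. Ww (g p) 1) ` {0..<2^B} = (\<lambda>p. Ww p 1) ` (g ` {0..<2^B})" by (simp add: image_image)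
  then have "(\<lambda>p. Ww (g p) 1) ` {0..<2^B} = (\<lambda>p. Ww p 1) ` {0..<2^B}" using gi by simp
  then show ?thesis using Hb by simp
qed auto

lemma Nx: "x \<noteq> Hb \<Longrightarrow> N x = nl h B (\<lambda>p. p) code x"
  by (cases x) auto

end

lemma adj_mk_eq:
  assumes "\<And>x. set (N1 x) = set (N2 x)"
  shows "adj (mkG V N1 enc) = adj (mkG V N2 enc)"
  using assms by (simp add: mkG_def)

lemma diff_adv:
  assumes c1: "cons2 h B g1 code enc" and c2: "cons2 h B g2 code enc" and ne: "g1 \<noteq> g2"
    and E1: "elects_in_time A (mkG (VS h B) (nl h B g1 code) enc) h s"
    and E2: "elects_in_time A (mkG (VS h B) (nl h B g2 code) enc) h s"
  shows False
proof -
  interpret X: cons2 h B g1 code enc by (rule c1)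
  interpret Y: cons2 h B g2 code enc by (rule c2)
  let ?G1 = "mkG (VS h B) (nl h B g1 code) enc" and ?G2 = "mkG (VS h B) (nl h B g2 code) enc"
  have "\<exists>p. g1 p \<noteq> g2 p" using ne by auto
  then obtain p where pg: "g1 p \<noteq> g2 p" by auto
  have pl: "p < 2^B"
  proof (rule ccontr)
    assume "\<not> p < 2^B"
    then have "g1 p = p" "g2 p = p" using permutes_not_in[OF X.gp] permutes_not_in[OF Y.gp] by auto
    then show False using pg by simp
  qed
  define j where "j = g1 p"
  define k where "k = g2 p"
  have jl: "j < 2^B" and kl: "k < 2^B" using X.g_lt Y.g_lt pl by (auto simp: j_def k_def)
  have jk: "j \<noteq> k" using pg by (simp add: j_def k_def)
  obtain q1 where q1: "q1 < 2^B" "g2 q1 = j" using Y.g_surj[OF jl] by auto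
  obtain q2 where q2: "q2 < 2^B" "g1 q2 = k" using X.g_surj[OF kl] by auto
  have q1p: "q1 \<noteq> p" using q1 pg j_def by auto
  have q2p: "q2 \<noteq> p" using q2 pg k_def by auto
  have gs: "gsize ?G2 = gsize ?G1" by (simp add: mkG_def)
  have ad: "adj ?G2 = adj ?G1" by (rule adj_mk_eq) (simp add: X.setN Y.setN)
  have po: "port ?G2 u = port ?G1 u" if u: "u \<noteq> enc Hb" for u
  proof (cases "u < card (VS h B)")
    case True
    then obtain x where x: "x \<in> VS h B" "u = enc x" using X.nodes by auto
    then have "x \<noteq> Hb" using u by auto
    then show ?thesis using x X.Nx Y.Nx by (simp add: mkG_def fun_eq_iff X.T.dec_enc[OF x(1)])
  qed (simp add: mkG_def fun_eq_iff)
  have "X.brN (enc (Cc j)) = X.brN (enc (Cc k))"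
  proof (rule incompat[OF X.T.wf gs ad po _ _ _ _ _ _ _ E1 E2])
    show "\<And>u w. adj ?G1 u w \<Longrightarrow> u \<noteq> enc Hb \<Longrightarrow> w \<noteq> enc Hb \<Longrightarrow> X.brN u = X.brN w"
      by (rule X.brN_adj)
    show "\<And>x r. x \<in> {enc (Cc j), enc (Cc k)} \<Longrightarrow> r \<le> h \<Longrightarrow> enc Hb \<notin> R ?G1 r x"
      using X.far_cc jl kl by auto
    show "enc (Cc j) \<noteq> enc Hb" "enc (Cc k) \<noteq> enc Hb" using X.Cc_ne_hub jl kl by auto
    show "enc (Cc j) < gsize ?G1" "enc (Cc k) < gsize ?G1" using X.T.enc_lt X.vCc jl kl X.gsGG by auto
    fix x u assume x: "x \<in> {enc (Cc j), enc (Cc k)}" and a: "adj ?G1 u (enc Hb)" and b: "X.brN u = X.brN x"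
    show "port ?G1 (enc Hb) u \<noteq> port ?G2 (enc Hb) u"
    proof (cases "x = enc (Cc j)")
      case True
      then have "u = enc (Ww j 1)" using X.hub_nbr[OF a] b X.brN_Cc[OF jl] by simp
      then show ?thesis using X.hub_port[OF pl] Y.hub_port[OF q1(1)] q1 q1p j_def by simp
    next
      case False
      then have "x = enc (Cc k)" using x by simp
      then have "u = enc (Ww k 1)" using X.hub_nbr[OF a] b X.brN_Cc[OF kl] by simp
      then show ?thesis using X.hub_port[OF q2(1)] Y.hub_port[OF pl] q2 q2p k_def by simp
    qed
  qed
  then show False using X.brN_Cc jl kl jk by simp
qed




lemma ln2_half: "1/2 \<le> ln (2::real)"
proof -
  have "ln (1/2::real) \<le> 1/2 - 1" by (rule ln_le_minus_one) simp
  then show ?thesis by (simp add: ln_div)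
qed

lemma loglog_bound:
  fixes t :: real assumes t: "1 \<le> t"
  shows "(log 2 t)^2 \<le> 16 * t"
proof -
  have s: "ln (sqrt t) \<le> sqrt t - 1" by (rule ln_le_minus_one) (use t in simp)
  have "ln t = 2 * ln (sqrt t)" using ln_sqrt[of t] t by simp
  then have l1: "ln t \<le> 2 * sqrt t" using s by simp
  have l0: "0 \<le> ln t" using t by simp
  have "(ln t)^2 \<le> (2 * sqrt t)^2" using l1 l0 by (rule power_mono)
  also have "\<dots> = 4 * t" using t by (simp add: power_mult_distrib)
  finally have a: "(ln t)^2 \<le> 4 * t" .
  have "(log 2 t)^2 = (ln t)^2 / (ln 2)^2" by (simp add: log_def power_divide)
  also have "\<dots> \<le> (4 * t) / (1/2)^2"
  proof (rule frac_le)
    show "0 \<le> 4 * t" using t by simp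
    show "(ln t)^2 \<le> 4 * t" by (rule a)
    show "0 < (1/2::real)^2" by simp
    show "(1/2::real)^2 \<le> (ln 2)^2" using ln2_half by (rule power_mono) simp
  qed
  also have "\<dots> = 16 * t" by (simp add: power2_eq_square)
  finally show ?thesis .
qed

lemma bound_term:
  fixes n :: nat and c :: real assumes n: "2 \<le> n" and c: "0 \<le> c"
  shows "c * real n * (log 2 (log 2 (real n)))\<^sup>2 / log 2 (real n) \<le> 16 * c * real n"
proof -
  have t: "1 \<le> log 2 (real n)" using n by simp
  then have tp: "0 < log 2 (real n)" by simp
  have "(log 2 (log 2 (real n)))\<^sup>2 \<le> 16 * log 2 (real n)" by (rule loglog_bound[OF t])
  then have "(log 2 (log 2 (real n)))\<^sup>2 / log 2 (real n) \<le> 16" using tp by (simp add: divide_le_eq)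
  then have "c * real n * ((log 2 (log 2 (real n)))\<^sup>2 / log 2 (real n)) \<le> c * real n * 16"
    using c by (intro mult_left_mono) auto
  then show ?thesis by (simp add: algebra_simps)
qed

lemma pow_le_fact: "k \<le> L \<Longrightarrow> k ^ (L - k) \<le> fact L"
proof (induction L)
  case 0 then show ?case by simp
next
  case (Suc L)
  show ?case
  proof (cases "k = Suc L")
    case True
    have "1 \<le> (fact (Suc L) :: nat)" using fact_ge_1 by blast
    then show ?thesis using True by simp
  next
    case False
    then have k: "k \<le> L" using Suc.prems by simp
    have "k ^ (Suc L - k) = k * k ^ (L - k)" using k by (simp add: Suc_diff_le)
    also have "\<dots> \<le> Suc L * fact L" using Suc.IH[OF k] k by (intro mult_mono) auto
    also have "\<dots> = fact (Suc L)" by simp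
    finally show ?thesis .
  qed
qed

lemma card_short_lists: "card {xs :: bool list. length xs < m} < 2 ^ m"
proof (induction m)
  case 0 then show ?case by simp
next
  case (Suc m)
  have e: "{xs :: bool list. length xs < Suc m} = {xs. length xs < m} \<union> {xs. length xs = m}" by auto
  have f1: "finite {xs :: bool list. length xs < m}"
    using finite_lists_length_le[of "UNIV :: bool set" m] by (rule finite_subset[rotated]) auto
  have c2: "card {xs :: bool list. length xs = m} = 2 ^ m"
    using card_lists_length_eq[of "UNIV :: bool set" m] by simp
  have "card {xs :: bool list. length xs < Suc m} \<le> card {xs :: bool list. length xs < m} + card {xs :: bool list. length xs = m}"
    unfolding e by (rule card_Un_le)
  then show ?case using Suc.IH c2 by simp
qed




lemma arith_bound:
  fixes h B :: nat assumes B: "2 \<le> B"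
  shows "3 + 2*h + 2^B * (h + 2 + 2*B) \<le> 4*(2*h+5) * ((B-1) * 2^(B-1))"
proof -
  obtain b where b: "B = b + 2" using B by (metis add.commute le_add_diff_inverse)
  define L where "L = (2::nat)^(b+1)"
  have "1 \<le> (2::nat)^b" by simp
  then have L2: "2 \<le> L" unfolding L_def by simp
  have e1: "(2::nat)^B = 2*L" unfolding L_def b by simp
  have e2: "(2::nat)^(B-1) = L" unfolding L_def b by simp
  have hL: "2*h \<le> h*L" using L2 by simp
  have "3 + 2*h + 2*L*(h + 2 + 2*(b+2)) \<le> 4*(2*h+5)*((b+1)*L)"
  proof -
    have "3 + 2*h + 2*L*(h + 2 + 2*(b+2)) = 3 + 2*h + 2*(h*L) + 4*(b*L) + 12*L" by (simp add: algebra_simps)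
    also have "\<dots> \<le> 8*(h*(b*L)) + 8*(h*L) + 20*(b*L) + 20*L" using hL L2 by linarith
    also have "\<dots> = 4*(2*h+5)*((b+1)*L)" by (simp add: algebra_simps)
    finally show ?thesis .
  qed
  then show ?thesis using e1 e2 b by simp
qed




lemma perB:
  fixes h B :: nat assumes h2: "2 \<le> h" and B2: "2 \<le> B"
  shows "\<exists>F::pgraph set. finite F \<and>
       (\<forall>G\<in>F. wf_pgraph G \<and> gsize G = card (VS h B) \<and> feasible G \<and> election_index G = h) \<and>
       (\<forall>(A::algorithm) (adv::pgraph \<Rightarrow> bool list).
          (\<forall>G\<in>F. elects_in_time A G h (adv G)) \<longrightarrow>
          (\<exists>G\<in>F. (B - 1) * 2^(B-1) \<le> length (adv G)))"
proof -
  have "card {0..<(2::nat)^B} = card (Pow {0..<B})" by (simp add: card_Pow)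
  then obtain code where code: "bij_betw code {0..<(2::nat)^B} (Pow {0..<B})"
    using finite_same_card_bij[of "{0..<(2::nat)^B}" "Pow {0..<B}"] by auto
  obtain enc where enc: "bij_betw enc (VS h B) {0..<card (VS h B)}"
    using ex_bij_betw_finite_nat[OF finite_VS] by auto
  have ci: "inj_on code {0..<2^B}" using code by (simp add: bij_betw_def)
  have cs: "\<And>j. j < 2^B \<Longrightarrow> code j \<subseteq> {0..<B}" using code by (auto simp: bij_betw_def)
  have C: "cons2 h B g code enc" if g: "g permutes {0..<2^B}" for g
    by (intro cons2.intro cons.intro cons2_axioms.intro) (use h2 B2 g ci cs enc in auto)
  let ?GG = "\<lambda>g. mkG (VS h B) (nl h B g code) enc"
  let ?P = "{g. g permutes {0..<(2::nat)^B}}"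
  define F where "F = ?GG ` ?P"
  have injG: "inj_on ?GG ?P"
  proof (rule inj_onI)
    fix g1 g2 assume g1: "g1 \<in> ?P" and g2: "g2 \<in> ?P" and e: "?GG g1 = ?GG g2"
    interpret X: cons2 h B g1 code enc using C g1 by simp
    interpret Y: cons2 h B g2 code enc using C g2 by simp
    show "g1 = g2"
    proof
      fix p show "g1 p = g2 p"
      proof (cases "p < 2^B")
        case True
        have "nbr (?GG g1) (enc Hb) p = enc (Ww (g1 p) 1)" using X.T.nbr_enc[OF X.vHb, of p] True
          by (simp add: nth_append)
        moreover have "nbr (?GG g2) (enc Hb) p = enc (Ww (g2 p) 1)" using Y.T.nbr_enc[OF Y.vHb, of p] True
          by (simp add: nth_append)
        ultimately have "enc (Ww (g1 p) 1) = enc (Ww (g2 p) 1)" using e by simp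
        moreover have "Ww (g1 p) 1 \<in> VS h B" "Ww (g2 p) 1 \<in> VS h B"
          using X.g_lt Y.g_lt True h2 by (auto simp: VS_def)
        ultimately show ?thesis using X.T.enc_inj by auto
      next
        case False
        then show ?thesis using permutes_not_in[OF X.gp] permutes_not_in[OF Y.gp] by simp
      qed
    qed
  qed
  have cardF: "card F = fact (2^B)"
    unfolding F_def using card_image[OF injG] card_permutations[of "{0..<(2::nat)^B}" "2^B"] by simp
  have finF: "finite F" unfolding F_def using finite_permutations[of "{0..<(2::nat)^B}"] by simp
  have props: "\<forall>G\<in>F. wf_pgraph G \<and> gsize G = card (VS h B) \<and> feasible G \<and> election_index G = h"
  proof
    fix G assume "G \<in> F"
    then obtain g where g: "g \<in> ?P" "G = ?GG g" unfolding F_def by auto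
    interpret X: cons2 h B g code enc using C g by simp
    show "wf_pgraph G \<and> gsize G = card (VS h B) \<and> feasible G \<and> election_index G = h"
      using X.T.wf X.gsGG X.feas X.eidx g by simp
  qed
  have alg: "\<exists>G\<in>F. (B - 1) * 2^(B-1) \<le> length (adv G)"
    if E: "\<forall>G\<in>F. elects_in_time A G h (adv G)" for A adv
  proof (rule ccontr)
    assume "\<not> (\<exists>G\<in>F. (B - 1) * 2^(B-1) \<le> length (adv G))"
    then have sh: "adv ` F \<subseteq> {xs. length xs < (B - 1) * 2^(B-1)}" by auto
    have ia: "inj_on adv F"
    proof (rule inj_onI)
      fix G1 G2 assume G1: "G1 \<in> F" and G2: "G2 \<in> F" and e: "adv G1 = adv G2"
      obtain g1 where g1: "g1 \<in> ?P" "G1 = ?GG g1" using G1 unfolding F_def by auto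
      obtain g2 where g2: "g2 \<in> ?P" "G2 = ?GG g2" using G2 unfolding F_def by auto
      show "G1 = G2"
      proof (rule ccontr)
        assume "G1 \<noteq> G2"
        then have "g1 \<noteq> g2" using g1 g2 by auto
        moreover have "elects_in_time A (?GG g1) h (adv G1)" using E G1 g1 by simp
        moreover have "elects_in_time A (?GG g2) h (adv G1)" using E G2 g2 e by simp
        ultimately show False using diff_adv[OF C[of g1] C[of g2]] g1 g2 by auto
      qed
    qed
    have "card (adv ` F) = fact (2^B)" using card_image[OF ia] cardF by simp
    moreover have "card (adv ` F) \<le> card {xs :: bool list. length xs < (B - 1) * 2^(B-1)}"
    proof (rule card_mono[OF _ sh])
      show "finite {xs :: bool list. length xs < (B - 1) * 2^(B-1)}"
        using finite_lists_length_le[of "UNIV :: bool set" "(B - 1) * 2^(B-1)"]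
        by (rule finite_subset[rotated]) auto
    qed
    moreover have "fact (2^B) \<ge> (2::nat)^((B - 1) * 2^(B-1))"
    proof -
      have e: "(2::nat)^B - 2^(B-1) = 2^(B-1)" and le: "(2::nat)^(B-1) \<le> 2^B"
        using B2 by (cases B; simp)+
      have "(2::nat)^((B - 1) * 2^(B-1)) = (2^(B-1))^(2^(B-1))" by (simp add: power_mult)
      also have "\<dots> = (2^(B-1))^(2^B - 2^(B-1))" using e by simp
      also have "\<dots> \<le> fact (2^B)" by (rule pow_le_fact[OF le])
      finally show ?thesis .
    qed
    ultimately show False using card_short_lists[of "(B - 1) * 2^(B-1)"] by simp
  qed
  show ?thesis using finF props alg by blast
qed




theorem theorem3:
  fixes \<phi> :: nat
  assumes "\<phi> > 1"
  shows "\<exists>c::real. c > 0 \<and>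
    infinite {n::nat. \<exists>F::pgraph set. finite F \<and>
       (\<forall>G\<in>F. wf_pgraph G \<and> gsize G = n \<and> feasible G \<and> election_index G = \<phi>) \<and>
       (\<forall>(A::algorithm) (adv::pgraph \<Rightarrow> bool list).
          (\<forall>G\<in>F. elects_in_time A G \<phi> (adv G)) \<longrightarrow>
          (\<exists>G\<in>F. real (length (adv G)) \<ge>
                    c * real n * (log 2 (log 2 (real n)))\<^sup>2 / log 2 (real n)))}"
proof -
  have h2: "2 \<le> \<phi>" using assms by simp
  define c :: real where "c = 1 / (64 * (2 * real \<phi> + 5))"
  have cpos: "c > 0" unfolding c_def by simp
  let ?S = "{n::nat. \<exists>F::pgraph set. finite F \<and>
       (\<forall>G\<in>F. wf_pgraph G \<and> gsize G = n \<and> feasible G \<and> election_index G = \<phi>) \<and>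
       (\<forall>(A::algorithm) (adv::pgraph \<Rightarrow> bool list).
          (\<forall>G\<in>F. elects_in_time A G \<phi> (adv G)) \<longrightarrow>
          (\<exists>G\<in>F. real (length (adv G)) \<ge>
                    c * real n * (log 2 (log 2 (real n)))\<^sup>2 / log 2 (real n)))}"
  have mem: "card (VS \<phi> B) \<in> ?S" if B2: "2 \<le> B" for B
  proof -
    let ?n = "card (VS \<phi> B)" and ?m = "(B - 1) * 2^(B-1)"
    obtain F where F: "finite F"
      "\<forall>G\<in>F. wf_pgraph G \<and> gsize G = ?n \<and> feasible G \<and> election_index G = \<phi>"
      "\<forall>(A::algorithm) (adv::pgraph \<Rightarrow> bool list). (\<forall>G\<in>F. elects_in_time A G \<phi> (adv G)) \<longrightarrow>
          (\<exists>G\<in>F. ?m \<le> length (adv G))"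
      using perB[OF h2 B2] by blast
    have n2: "2 \<le> ?n"
    proof -
      have "(2::nat) \<le> 2^B" using B2 by (metis one_le_numeral power_increasing power_one_right order_trans)
      then show ?thesis using card_VS_ge[of B \<phi>] by simp
    qed
    have nm: "real ?n \<le> 4 * (2 * real \<phi> + 5) * real ?m"
    proof -
      have "?n \<le> 4*(2*\<phi>+5) * ?m" using card_VS_le[of \<phi> B] arith_bound[OF B2, of \<phi>] by simp
      then have "real ?n \<le> real (4*(2*\<phi>+5) * ?m)" by (simp only: of_nat_le_iff)
      then show ?thesis by simp
    qed
    have key: "c * real ?n * (log 2 (log 2 (real ?n)))\<^sup>2 / log 2 (real ?n) \<le> real ?m"
    proof -
      have "c * real ?n * (log 2 (log 2 (real ?n)))\<^sup>2 / log 2 (real ?n) \<le> 16 * c * real ?n"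
        using bound_term[OF n2, of c] cpos by simp
      also have "\<dots> = real ?n / (4 * (2 * real \<phi> + 5))" unfolding c_def by (simp add: field_simps)
      also have "\<dots> \<le> real ?m" using nm by (simp add: divide_le_eq mult.commute)
      finally show ?thesis .
    qed
    show ?thesis
    proof (intro CollectI exI conjI)
      show "finite F" by (rule F(1))
      show "\<forall>G\<in>F. wf_pgraph G \<and> gsize G = ?n \<and> feasible G \<and> election_index G = \<phi>" by (rule F(2))
      show "\<forall>(A::algorithm) (adv::pgraph \<Rightarrow> bool list).
          (\<forall>G\<in>F. elects_in_time A G \<phi> (adv G)) \<longrightarrow>
          (\<exists>G\<in>F. real (length (adv G)) \<ge>
                    c * real ?n * (log 2 (log 2 (real ?n)))\<^sup>2 / log 2 (real ?n))"
      proof (intro allI impI)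
        fix A :: algorithm and adv :: "pgraph \<Rightarrow> bool list"
        assume "\<forall>G\<in>F. elects_in_time A G \<phi> (adv G)"
        then obtain G where G: "G \<in> F" "?m \<le> length (adv G)" using F(3) by blast
        then have "real ?m \<le> real (length (adv G))" by (simp only: of_nat_le_iff)
        then show "\<exists>G\<in>F. real (length (adv G)) \<ge>
                    c * real ?n * (log 2 (log 2 (real ?n)))\<^sup>2 / log 2 (real ?n)"
          using G(1) key by force
      qed
    qed
  qed
  have "infinite ?S"
  proof
    assume "finite ?S"
    then obtain M where M: "\<forall>n\<in>?S. n \<le> M" using finite_nat_set_iff_bounded_le by blast
    have "M + 2 < 2^(M+2)" by (rule less_exp)
    also have "(2::nat)^(M+2) \<le> card (VS \<phi> (M+2))" by (rule card_VS_ge)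
    finally have "M < card (VS \<phi> (M+2))" by simp
    moreover have "card (VS \<phi> (M+2)) \<le> M" using M mem[of "M+2"] by simp
    ultimately show False by simp
  qed
  then show ?thesis using cpos by blast
qed


end
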